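(* Let $r\ge 3$ and $n\ge 2r$, and let $M$ be a matroid of rank $r$ on a linearly ordered ground set $E$ of $n$ elements. Then $|\mathcal V(M)|\le\frac{1}{n-r+1}\binom{n}{r}$.
   Context: Graded lexicographic order on $2^E$: $X\prec Y$ if $|X|<|Y|$, or $|X|=|Y|$ and $\min(X\triangle Y)\in X$; $\min\mathcal X$ is the $\prec$-smallest member. $X$ is $k$-closed in $M$ if $\mathrm{cl}_M(Y)\subseteq X$ for all $Y\subseteq X$ with $|Y|\le k$; $\mathrm{cl}_k(X)$ is the intersection of all $k$-closed supersets of $X$ (so $\mathrm{cl}_{-1}(X)=X$). For a flat $F$ of rank $k$, $U^*_F=\min\{U:\mathrm{cl}_{k-1}(U)=F\}$; $\mathcal U^*_k=\{U^*_F: F\text{ a flat of rank }k,\ |U^*_F|>k\}$. $V\subseteq U$ is consecutive in $U$ if there are no $e,g\in V$, $f\in U\setminus V$ with $e<f<g$. For $U\in\mathcal U^*_k$, $\mathcal V(U)$ is the set of consecutive $(k+1)$-subsets of $U$; $\mathcal V_k=\bigcup_{U\in\mathcal U^*_k}\mathcal V(U)$ and $\mathcal V(M)=\bigcup_{k=0}^{r-1}\mathcal V_k$. *)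

theory Defs
  imports Complex_Main
begin

definition matroid :: "'a set \<Rightarrow> ('a set \<Rightarrow> bool) \<Rightarrow> bool" where
  "matroid E indep \<longleftrightarrow>
     finite E \<and>
     (\<forall>I. indep I \<longrightarrow> I \<subseteq> E) \<and>
     indep {} \<and>
     (\<forall>I J. indep J \<and> I \<subseteq> J \<longrightarrow> indep I) \<and>
     (\<forall>I J. indep I \<and> indep J \<and> card I < card J \<longrightarrow> (\<exists>e \<in> J - I. indep (insert e I)))"

definition mrank :: "('a set \<Rightarrow> bool) \<Rightarrow> 'a set \<Rightarrow> nat" where
  "mrank indep X = Max (card ` {I. I \<subseteq> X \<and> indep I})"

definition mcl :: "'a set \<Rightarrow> ('a set \<Rightarrow> bool) \<Rightarrow> 'a set \<Rightarrow> 'a set" where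
  "mcl E indep X = {e \<in> E. mrank indep (insert e X) = mrank indep X}"

definition flat :: "'a set \<Rightarrow> ('a set \<Rightarrow> bool) \<Rightarrow> 'a set \<Rightarrow> bool" where
  "flat E indep F \<longleftrightarrow> F \<subseteq> E \<and> mcl E indep F = F"

definition glex_less :: "'a::linorder set \<Rightarrow> 'a set \<Rightarrow> bool" where
  "glex_less X Y \<longleftrightarrow> card X < card Y \<or>
     (card X = card Y \<and> X \<noteq> Y \<and> Min ((X - Y) \<union> (Y - X)) \<in> X)"

definition glex_min :: "'a::linorder set set \<Rightarrow> 'a set" where
  "glex_min \<X> = (THE U. U \<in> \<X> \<and> (\<forall>V \<in> \<X>. V \<noteq> U \<longrightarrow> glex_less U V))"

text \<open>k-closed sets and the k-closure (k :: int, so that k = -1 is allowed).\<close>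

definition k_closed :: "'a set \<Rightarrow> ('a set \<Rightarrow> bool) \<Rightarrow> int \<Rightarrow> 'a set \<Rightarrow> bool" where
  "k_closed E indep k X \<longleftrightarrow>
     (\<forall>Y. Y \<subseteq> X \<and> int (card Y) \<le> k \<longrightarrow> mcl E indep Y \<subseteq> X)"

definition k_cl :: "'a set \<Rightarrow> ('a set \<Rightarrow> bool) \<Rightarrow> int \<Rightarrow> 'a set \<Rightarrow> 'a set" where
  "k_cl E indep k X = \<Inter> {Z. X \<subseteq> Z \<and> Z \<subseteq> E \<and> k_closed E indep k Z}"

definition Ustar :: "'a::linorder set \<Rightarrow> ('a set \<Rightarrow> bool) \<Rightarrow> 'a set \<Rightarrow> 'a set" where
  "Ustar E indep F =
     glex_min {U. U \<subseteq> E \<and> k_cl E indep (int (mrank indep F) - 1) U = F}"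

definition Ustar_family :: "'a::linorder set \<Rightarrow> ('a set \<Rightarrow> bool) \<Rightarrow> nat \<Rightarrow> 'a set set" where
  "Ustar_family E indep k =
     {Ustar E indep F | F. flat E indep F \<and> mrank indep F = k \<and> card (Ustar E indep F) > k}"

definition consecutive :: "'a::linorder set \<Rightarrow> 'a set \<Rightarrow> bool" where
  "consecutive V U \<longleftrightarrow> V \<subseteq> U \<and>
     \<not> (\<exists>e \<in> V. \<exists>g \<in> V. \<exists>f \<in> U - V. e < f \<and> f < g)"

definition V_of :: "nat \<Rightarrow> 'a::linorder set \<Rightarrow> 'a set set" where
  "V_of k U = {V. consecutive V U \<and> card V = k + 1}"

definition V_k :: "'a::linorder set \<Rightarrow> ('a set \<Rightarrow> bool) \<Rightarrow> nat \<Rightarrow> 'a set set" where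
  "V_k E indep k = (\<Union>U \<in> Ustar_family E indep k. V_of k U)"

definition V_M :: "'a::linorder set \<Rightarrow> ('a set \<Rightarrow> bool) \<Rightarrow> 'a set set" where
  "V_M E indep = (\<Union>k < mrank indep E. V_k E indep k)"

end

theory Submission
  imports Defs
begin

locale mloc =
  fixes E :: "'a::linorder set" and indep :: "'a set \<Rightarrow> bool"
  assumes mat: "matroid E indep"
begin

lemma finE: "finite E" using mat unfolding matroid_def by blast
lemma indep_sub: "indep I \<Longrightarrow> I \<subseteq> E" using mat unfolding matroid_def by blast
lemma indep_empty: "indep {}" using mat unfolding matroid_def by blast
lemma indep_mono: "indep J \<Longrightarrow> I \<subseteq> J \<Longrightarrow> indep I" using mat unfolding matroid_def by blast
lemma augment: "indep I \<Longrightarrow> indep J \<Longrightarrow> card I < card J \<Longrightarrow> \<exists>e \<in> J - I. indep (insert e I)"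
  using mat unfolding matroid_def by blast
lemma indep_fin: "indep I \<Longrightarrow> finite I" using indep_sub finE finite_subset by blast

lemma fin_cards: "finite (card ` {I. I \<subseteq> X \<and> indep I})"
proof -
  have "{I. I \<subseteq> X \<and> indep I} \<subseteq> Pow E" using indep_sub by blast
  then show ?thesis using finE by (meson finite_Pow_iff finite_imageI finite_subset)
qed

lemma ne_cards: "card ` {I. I \<subseteq> X \<and> indep I} \<noteq> {}" using indep_empty by blast

lemma rank_ge: "indep I \<Longrightarrow> I \<subseteq> X \<Longrightarrow> card I \<le> mrank indep X"
  unfolding mrank_def using fin_cards by (intro Max_ge) auto

lemma rank_ex: "\<exists>I. I \<subseteq> X \<and> indep I \<and> card I = mrank indep X"
proof -
  have "mrank indep X \<in> card ` {I. I \<subseteq> X \<and> indep I}"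
    unfolding mrank_def using fin_cards ne_cards by (rule Max_in)
  then show ?thesis by auto
qed

lemma rank_mono: "X \<subseteq> Y \<Longrightarrow> mrank indep X \<le> mrank indep Y"
  using rank_ex[of X] rank_ge by (metis order_trans)

lemma rank_le_card: "finite X \<Longrightarrow> mrank indep X \<le> card X"
proof -
  assume f: "finite X"
  obtain I where "I \<subseteq> X" "card I = mrank indep X" using rank_ex by blast
  then show ?thesis using card_mono[OF f, of I] by simp
qed

lemma rank_indep: "indep I \<Longrightarrow> mrank indep I = card I"
  using rank_ge[of I I] rank_le_card[of I] indep_fin by force

lemma rank_le_E: "mrank indep X \<le> card E"
proof -
  obtain I where "I \<subseteq> X" "indep I" "card I = mrank indep X" using rank_ex by blast
  then show ?thesis using card_mono[OF finE] indep_sub by metis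
qed

lemma extend: "indep J \<Longrightarrow> J \<subseteq> X \<Longrightarrow> \<exists>I. J \<subseteq> I \<and> I \<subseteq> X \<and> indep I \<and> card I = mrank indep X"
proof (induction "mrank indep X - card J" arbitrary: J rule: less_induct)
  case less
  show ?case
  proof (cases "card J < mrank indep X")
    case True
    obtain I where I: "I \<subseteq> X" "indep I" "card I = mrank indep X" using rank_ex by blast
    then obtain e where e: "e \<in> I - J" "indep (insert e J)" using augment[of J I] less True by auto
    have fj: "finite J" using less indep_fin by blast
    have "card (insert e J) = Suc (card J)" using e fj by auto
    then have "mrank indep X - card (insert e J) < mrank indep X - card J" using True by auto
    then obtain I' where "insert e J \<subseteq> I'" "I' \<subseteq> X" "indep I'" "card I' = mrank indep X"
      using less(1)[of "insert e J"] e I less by auto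
    then show ?thesis by auto
  next
    case False
    then show ?thesis using rank_ge[of J X] less by (intro exI[of _ J]) auto
  qed
qed

lemma dep_elem: assumes "Y \<subseteq> E" "\<not> indep Y"
  shows "\<exists>y\<in>Y. y \<in> mcl E indep (Y - {y})"
proof -
  obtain I where I: "I \<subseteq> Y" "indep I" "card I = mrank indep Y" using rank_ex by blast
  then have "I \<noteq> Y" using assms by auto
  then obtain y where y: "y \<in> Y" "y \<notin> I" using I by auto
  have "I \<subseteq> Y - {y}" using I y by auto
  then have "card I \<le> mrank indep (Y - {y})" using rank_ge I by blast
  moreover have "mrank indep (Y - {y}) \<le> mrank indep Y" by (rule rank_mono) auto
  moreover have "insert y (Y - {y}) = Y" using y by auto
  ultimately have "mrank indep (insert y (Y - {y})) = mrank indep (Y - {y})" using I by auto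
  then show ?thesis unfolding mcl_def using y assms by auto
qed

lemma cl_mono_elem: assumes "x \<in> mcl E indep Y" "Y \<subseteq> X"
  shows "x \<in> mcl E indep X"
proof -
  have xE: "x \<in> E" and eq: "mrank indep (insert x Y) = mrank indep Y" using assms unfolding mcl_def by auto
  obtain I where I: "I \<subseteq> Y" "indep I" "card I = mrank indep Y" using rank_ex by blast
  obtain J where J: "I \<subseteq> J" "J \<subseteq> X" "indep J" "card J = mrank indep X" using extend[of I X] I assms by auto
  have "mrank indep (insert x X) \<le> mrank indep X"
  proof (rule ccontr)
    assume "\<not> ?thesis"
    then have lt: "card J < mrank indep (insert x X)" using J by auto
    obtain K where K: "K \<subseteq> insert x X" "indep K" "card K = mrank indep (insert x X)" using rank_ex by blast
    then obtain e where e: "e \<in> K - J" "indep (insert e J)" using augment[of J K] J lt by auto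
    have fJ: "finite J" using J indep_fin by auto
    show False
    proof (cases "e \<in> X")
      case True
      then have "card (insert e J) \<le> mrank indep X" using rank_ge[of "insert e J" X] e J by auto
      then show False using e fJ J by auto
    next
      case False
      then have ex: "e = x" using e K by auto
      have "indep (insert x I)" using e ex J indep_mono by (metis insert_mono)
      moreover have "x \<notin> I" using e ex J by auto
      moreover have "finite I" using I indep_fin by auto
      ultimately have "card (insert x I) \<le> mrank indep (insert x Y)"
        using rank_ge[of "insert x I" "insert x Y"] I by auto
      then show False using eq I \<open>x \<notin> I\<close> \<open>finite I\<close> by auto
    qed
  qed
  moreover have "mrank indep X \<le> mrank indep (insert x X)" by (rule rank_mono) auto
  ultimately show ?thesis unfolding mcl_def using xE by auto
qed

lemma flat_cl: "flat E indep F \<Longrightarrow> Y \<subseteq> F \<Longrightarrow> mcl E indep Y \<subseteq> F"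
  unfolding flat_def using cl_mono_elem by blast

lemma flat_span: assumes "flat E indep G" "S \<subseteq> G" "indep S" "card S = mrank indep G"
  shows "mcl E indep S = G"
proof
  show "mcl E indep S \<subseteq> G" using flat_cl assms by blast
  show "G \<subseteq> mcl E indep S"
  proof
    fix z assume z: "z \<in> G"
    have "mrank indep (insert z S) \<le> mrank indep G" using z assms by (intro rank_mono) auto
    moreover have "mrank indep S \<le> mrank indep (insert z S)" by (rule rank_mono) auto
    ultimately have "mrank indep (insert z S) = mrank indep S" using rank_indep assms by auto
    then show "z \<in> mcl E indep S" unfolding mcl_def using z assms(1) unfolding flat_def by auto
  qed
qed



lemma E_closed: "k_closed E indep k E"
  unfolding k_closed_def mcl_def by auto

lemma kcl_sub: "X \<subseteq> E \<Longrightarrow> X \<subseteq> k_cl E indep k X"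
  unfolding k_cl_def by auto

lemma kcl_E: "X \<subseteq> E \<Longrightarrow> k_cl E indep k X \<subseteq> E"
  unfolding k_cl_def using E_closed by auto

lemma kcl_least: "Z \<subseteq> E \<Longrightarrow> X \<subseteq> Z \<Longrightarrow> k_closed E indep k Z \<Longrightarrow> k_cl E indep k X \<subseteq> Z"
  unfolding k_cl_def by auto

lemma kcl_closed: "k_closed E indep k (k_cl E indep k X)"
proof (unfold k_closed_def, intro allI impI)
  fix Y assume Y: "Y \<subseteq> k_cl E indep k X \<and> int (card Y) \<le> k"
  show "mcl E indep Y \<subseteq> k_cl E indep k X"
    unfolding k_cl_def
  proof (rule Inter_greatest)
    fix Z assume Z: "Z \<in> {Z. X \<subseteq> Z \<and> Z \<subseteq> E \<and> k_closed E indep k Z}"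
    then have "k_cl E indep k X \<subseteq> Z" unfolding k_cl_def by (intro Inter_lower)
    then have "Y \<subseteq> Z" using Y by auto
    then show "mcl E indep Y \<subseteq> Z" using Z Y unfolding k_closed_def by auto
  qed
qed

lemma kcl_small: "Y \<subseteq> k_cl E indep k X \<Longrightarrow> int (card Y) \<le> k \<Longrightarrow> mcl E indep Y \<subseteq> k_cl E indep k X"
  using kcl_closed unfolding k_closed_def by blast

lemma kcl_mono: "X' \<subseteq> E \<Longrightarrow> X \<subseteq> X' \<Longrightarrow> k_cl E indep k X \<subseteq> k_cl E indep k X'"
proof -
  assume a: "X' \<subseteq> E" "X \<subseteq> X'"
  have "X \<subseteq> k_cl E indep k X'" using kcl_sub[OF a(1), of k] a(2) by auto
  then show ?thesis using kcl_least[OF kcl_E[OF a(1)] _ kcl_closed] by blast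
qed

lemma flat_kclosed: "flat E indep F \<Longrightarrow> k_closed E indep k F"
  unfolding k_closed_def using flat_cl by simp

lemma flat_kcl: "flat E indep F \<Longrightarrow> k_cl E indep k F = F"
proof -
  assume f: "flat E indep F"
  then have FE: "F \<subseteq> E" unfolding flat_def by auto
  show ?thesis using kcl_least[OF FE order.refl flat_kclosed[OF f]] kcl_sub[OF FE] by auto
qed

end

lemma glex_asym: "finite X \<Longrightarrow> finite Y \<Longrightarrow> glex_less X Y \<Longrightarrow> \<not> glex_less Y X"
proof
  assume f: "finite X" "finite Y" and a: "glex_less X Y" and b: "glex_less Y X"
  show False
  proof (cases "card X = card Y")
    case False then show False using a b unfolding glex_less_def by auto
  next
    case True
    have eq: "(Y - X) \<union> (X - Y) = (X - Y) \<union> (Y - X)" by blast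
    have ne: "X \<noteq> Y" using a True unfolding glex_less_def by auto
    have m: "Min ((X - Y) \<union> (Y - X)) \<in> X" "Min ((X - Y) \<union> (Y - X)) \<in> Y"
      using a b True eq unfolding glex_less_def by auto
    have "(X - Y) \<union> (Y - X) \<noteq> {}" using ne by blast
    then have "Min ((X - Y) \<union> (Y - X)) \<in> (X - Y) \<union> (Y - X)" using f by (intro Min_in) auto
    then show False using m by blast
  qed
qed
lemma glex_card: "card X < card Y \<Longrightarrow> glex_less X Y"
  unfolding glex_less_def by auto

lemma glex_total: "finite X \<Longrightarrow> finite Y \<Longrightarrow> X \<noteq> Y \<Longrightarrow> glex_less X Y \<or> glex_less Y X"
proof -
  assume f: "finite X" "finite Y" and ne: "X \<noteq> Y"
  have eq: "(Y - X) \<union> (X - Y) = (X - Y) \<union> (Y - X)" by blast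
  have "(X - Y) \<union> (Y - X) \<noteq> {}" using ne by auto
  then have "Min ((X - Y) \<union> (Y - X)) \<in> (X - Y) \<union> (Y - X)" using f by (intro Min_in) auto
  then have "Min ((X - Y) \<union> (Y - X)) \<in> X \<or> Min ((Y - X) \<union> (X - Y)) \<in> Y" using eq by auto
  moreover have "card X < card Y \<or> card Y < card X \<or> card X = card Y" by linarith
  ultimately show ?thesis unfolding glex_less_def using ne by auto
qed
lemma glex_trans: assumes f: "finite X" "finite Y" "finite Z" and xy: "glex_less X Y" and yz: "glex_less Y Z"
  shows "glex_less X Z"
proof (cases "card X = card Y \<and> card Y = card Z")
  case False
  then show ?thesis using xy yz unfolding glex_less_def by auto
next
  case True
  define a where "a = Min ((X - Y) \<union> (Y - X))"
  define b where "b = Min ((Y - Z) \<union> (Z - Y))"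
  have nxy: "X \<noteq> Y" and nyz: "Y \<noteq> Z" using xy yz True unfolding glex_less_def by auto
  have fa: "finite ((X - Y) \<union> (Y - X))" "finite ((Y - Z) \<union> (Z - Y))" using f by auto
  have ne: "(X - Y) \<union> (Y - X) \<noteq> {}" "(Y - Z) \<union> (Z - Y) \<noteq> {}" using nxy nyz by auto
  have a1: "a \<in> (X - Y) \<union> (Y - X)" unfolding a_def using fa ne by (intro Min_in) auto
  have b1: "b \<in> (Y - Z) \<union> (Z - Y)" unfolding b_def using fa ne by (intro Min_in) auto
  have "a \<in> X" using xy True unfolding glex_less_def a_def by auto
  then have ain: "a \<in> X" "a \<notin> Y" using a1 by auto
  have "b \<in> Y" using yz True unfolding glex_less_def b_def by auto
  then have bin: "b \<in> Y" "b \<notin> Z" using b1 by auto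
  have amin: "\<And>t. t \<in> (X - Y) \<union> (Y - X) \<Longrightarrow> a \<le> t" unfolding a_def using fa by auto
  have bmin: "\<And>t. t \<in> (Y - Z) \<union> (Z - Y) \<Longrightarrow> b \<le> t" unfolding b_def using fa by auto
  have agree1: "t \<in> X \<longleftrightarrow> t \<in> Y" if "t < a" for t
  proof -
    have "t \<notin> (X - Y) \<union> (Y - X)"
    proof
      assume "t \<in> (X - Y) \<union> (Y - X)"
      then have "a \<le> t" by (rule amin)
      then show False using that by simp
    qed
    then show ?thesis by auto
  qed
  have agree2: "t \<in> Y \<longleftrightarrow> t \<in> Z" if "t < b" for t
  proof -
    have "t \<notin> (Y - Z) \<union> (Z - Y)"
    proof
      assume "t \<in> (Y - Z) \<union> (Z - Y)"
      then have "b \<le> t" by (rule bmin)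
      then show False using that by simp
    qed
    then show ?thesis by auto
  qed
  have "a \<noteq> b" using ain bin by auto
  then consider "a < b" | "b < a" by (blast elim: linorder_neqE)
  then show ?thesis
  proof cases
    case 1
    have aZ: "a \<notin> Z" using agree2[OF 1] ain by auto
    have low: "t \<in> X \<longleftrightarrow> t \<in> Z" if "t < a" for t using agree1[OF that] agree2[of t] that 1 by auto
    have "a \<in> (X - Z) \<union> (Z - X)" using ain aZ by auto
    moreover have "a \<le> t" if "t \<in> (X - Z) \<union> (Z - X)" for t
    proof (rule ccontr)
      assume "\<not> a \<le> t" then have "t < a" by auto
      then show False using low[of t] that by auto
    qed
    ultimately have "Min ((X - Z) \<union> (Z - X)) = a" using f by (intro Min_eqI) auto
    then show ?thesis unfolding glex_less_def using True ain aZ by auto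
  next
    case 2
    have bX: "b \<in> X" using agree1[OF 2] bin by auto
    have low: "t \<in> X \<longleftrightarrow> t \<in> Z" if "t < b" for t using agree1[of t] agree2[OF that] that 2 by auto
    have "b \<in> (X - Z) \<union> (Z - X)" using bX bin by auto
    moreover have "b \<le> t" if "t \<in> (X - Z) \<union> (Z - X)" for t
    proof (rule ccontr)
      assume "\<not> b \<le> t" then have "t < b" by auto
      then show False using low[of t] that by auto
    qed
    ultimately have "Min ((X - Z) \<union> (Z - X)) = b" using f by (intro Min_eqI) auto
    then show ?thesis unfolding glex_less_def using True bX bin by auto
  qed
qed

lemma glex_min_ex: assumes "finite \<X>" "\<X> \<noteq> {}" "\<forall>X\<in>\<X>. finite X"
  shows "\<exists>U\<in>\<X>. \<forall>V\<in>\<X>. V \<noteq> U \<longrightarrow> glex_less U V"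
  using assms
proof (induction rule: finite_ne_induct)
  case (singleton x)
  then show ?case by auto
next
  case (insert x F)
  have finF: "\<forall>X\<in>F. finite X" using insert.prems by auto
  obtain U where U: "U \<in> F" "\<forall>V\<in>F. V \<noteq> U \<longrightarrow> glex_less U V" using insert.IH[OF finF] by blast
  have fU: "finite U" "finite x" using insert.prems U by auto
  show ?case
  proof (cases "glex_less x U")
    case True
    have "\<forall>V\<in>insert x F. V \<noteq> x \<longrightarrow> glex_less x V"
    proof (intro ballI impI)
      fix V assume V: "V \<in> insert x F" "V \<noteq> x"
      then have VF: "V \<in> F" by auto
      show "glex_less x V"
      proof (cases "V = U")
        case True then show ?thesis using \<open>glex_less x U\<close> by simp
      next
        case False
        then have "glex_less U V" using U VF by auto
        moreover have "finite V" using finF VF by auto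
        ultimately show ?thesis using glex_trans[of x U V] \<open>glex_less x U\<close> fU by blast
      qed
    qed
    then show ?thesis by blast
  next
    case False
    have "x \<noteq> U" using insert.hyps U by auto
    then have "glex_less U x" using glex_total[of x U] fU False by blast
    then show ?thesis using U by auto
  qed
qed

lemma glex_min_prop: assumes "finite \<X>" "\<X> \<noteq> {}" "\<forall>X\<in>\<X>. finite X"
  shows "glex_min \<X> \<in> \<X> \<and> (\<forall>V\<in>\<X>. V \<noteq> glex_min \<X> \<longrightarrow> glex_less (glex_min \<X>) V)"
proof -
  obtain U where U: "U \<in> \<X>" "\<forall>V\<in>\<X>. V \<noteq> U \<longrightarrow> glex_less U V" using glex_min_ex[OF assms] by blast
  have "glex_min \<X> = U" unfolding glex_min_def
  proof (rule the_equality)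
    show "U \<in> \<X> \<and> (\<forall>V\<in>\<X>. V \<noteq> U \<longrightarrow> glex_less U V)" using U by auto
    fix W assume W: "W \<in> \<X> \<and> (\<forall>V\<in>\<X>. V \<noteq> W \<longrightarrow> glex_less W V)"
    show "W = U"
    proof (rule ccontr)
      assume "W \<noteq> U"
      then have a: "glex_less W U" and b: "glex_less U W" using W U by auto
      have "finite W" "finite U" using assms(3) W U by auto
      then show False using glex_asym a b by blast
    qed
  qed
  then show ?thesis using U by auto
qed

context mloc begin

definition Xs :: "'a set \<Rightarrow> 'a set set" where
  "Xs F = {U. U \<subseteq> E \<and> k_cl E indep (int (mrank indep F) - 1) U = F}"

lemma Xs_fin: "finite (Xs F)"
proof -
  have "Xs F \<subseteq> Pow E" unfolding Xs_def by auto
  then show ?thesis using finE finite_subset by blast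
qed

lemma ustar_basic: assumes "flat E indep F"
  shows "Ustar E indep F \<in> Xs F \<and> (\<forall>V\<in>Xs F. V \<noteq> Ustar E indep F \<longrightarrow> glex_less (Ustar E indep F) V)"
proof -
  have FE: "F \<subseteq> E" using assms unfolding flat_def by auto
  have "F \<in> Xs F" unfolding Xs_def using FE flat_kcl[OF assms] by auto
  then have ne: "Xs F \<noteq> {}" by auto
  have fin: "\<forall>X\<in>Xs F. finite X" unfolding Xs_def using finE finite_subset by blast
  show ?thesis unfolding Ustar_def Xs_def[symmetric] using glex_min_prop[OF Xs_fin ne fin] by blast
qed

lemma ustar_E: "flat E indep F \<Longrightarrow> Ustar E indep F \<subseteq> E"
  using ustar_basic unfolding Xs_def by blast

lemma ustar_kcl: "flat E indep F \<Longrightarrow> k_cl E indep (int (mrank indep F) - 1) (Ustar E indep F) = F"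
  using ustar_basic unfolding Xs_def by blast

lemma ustar_F: "flat E indep F \<Longrightarrow> Ustar E indep F \<subseteq> F"
  using ustar_kcl ustar_E kcl_sub by metis

lemma ustar_fin: "flat E indep F \<Longrightarrow> finite (Ustar E indep F)"
  using ustar_E finE finite_subset by blast

lemma ustar_min: assumes "flat E indep F" "U' \<subseteq> E" "k_cl E indep (int (mrank indep F) - 1) U' = F"
  and "glex_less U' (Ustar E indep F)"
  shows False
proof -
  have U'X: "U' \<in> Xs F" unfolding Xs_def using assms by auto
  have ne: "U' \<noteq> Ustar E indep F" using assms(4) unfolding glex_less_def by auto
  then have "glex_less (Ustar E indep F) U'" using ustar_basic[OF assms(1)] U'X by blast
  moreover have "finite U'" using assms(2) finE finite_subset by blast
  ultimately show False using glex_asym assms(4) ustar_fin[OF assms(1)] by blast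
qed

lemma ustar_indep: assumes F: "flat E indep F" and Y: "Y \<subseteq> Ustar E indep F" "card Y \<le> mrank indep F"
  shows "indep Y"
proof (rule ccontr)
  assume dep: "\<not> indep Y"
  define U where "U = Ustar E indep F"
  define k where "k = mrank indep F"
  have UE: "U \<subseteq> E" unfolding U_def using ustar_E[OF F] .
  have YE: "Y \<subseteq> E" using Y UE unfolding U_def by auto
  obtain y where y: "y \<in> Y" "y \<in> mcl E indep (Y - {y})" using dep_elem[OF YE dep] by blast
  have finY: "finite Y" using YE finE finite_subset by blast
  have cY: "card (Y - {y}) = card Y - 1" using y finY by auto
  have cY1: "card Y \<ge> 1" using y finY by (metis One_nat_def Suc_leI card_gt_0_iff empty_iff)
  define U' where "U' = U - {y}"
  have U'E: "U' \<subseteq> E" unfolding U'_def using UE by auto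
  have sub: "Y - {y} \<subseteq> k_cl E indep (int k - 1) U'"
    using kcl_sub[OF U'E] Y unfolding U'_def U_def by auto
  have "int (card (Y - {y})) \<le> int k - 1" using cY cY1 Y unfolding k_def by auto
  then have "mcl E indep (Y - {y}) \<subseteq> k_cl E indep (int k - 1) U'" using kcl_small[OF sub] by blast
  then have yin: "y \<in> k_cl E indep (int k - 1) U'" using y by auto
  have "U \<subseteq> k_cl E indep (int k - 1) U'" using yin kcl_sub[OF U'E] unfolding U'_def by auto
  then have "k_cl E indep (int k - 1) U \<subseteq> k_cl E indep (int k - 1) U'"
    using kcl_least[OF kcl_E[OF U'E] _ kcl_closed] by blast
  moreover have "k_cl E indep (int k - 1) U = F" unfolding U_def k_def using ustar_kcl[OF F] .
  moreover have "k_cl E indep (int k - 1) U' \<subseteq> k_cl E indep (int k - 1) U"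
    using kcl_mono[OF UE] unfolding U'_def by auto
  ultimately have eq: "k_cl E indep (int k - 1) U' = F" by auto
  have "y \<in> U" using y Y unfolding U_def by auto
  moreover have "finite U" using UE finE finite_subset by blast
  ultimately have "card U' < card U" unfolding U'_def by (meson card_Diff1_less)
  then have "glex_less U' U" by (rule glex_card)
  then show False using ustar_min[OF F U'E] eq unfolding U_def k_def by blast
qed

lemma ustar_span: assumes G: "flat E indep G" and S: "S \<subseteq> Ustar E indep G" "card S = mrank indep G"
  shows "mcl E indep S = G"
proof -
  have "indep S" using ustar_indep[OF G S(1)] S(2) by auto
  moreover have "S \<subseteq> G" using S ustar_F[OF G] by auto
  ultimately show ?thesis using flat_span[OF G] S by auto
qed

lemma ustar_unique: assumes "flat E indep G1" "flat E indep G2" "S \<subseteq> Ustar E indep G1" "S \<subseteq> Ustar E indep G2"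
  "card S = mrank indep G1" "card S = mrank indep G2"
  shows "G1 = G2"
  using ustar_span assms by metis

lemma swap: assumes G: "flat E indep G" and m: "mrank indep G = m"
  and S: "S \<subseteq> Ustar E indep G" "card S = m"
  and x: "x \<in> Ustar E indep G" "x \<notin> S" and y: "y \<in> S" and xy: "x < y"
  and H: "flat E indep H" and j: "mrank indep H > m"
  shows "\<not> S \<subseteq> Ustar E indep H"
proof
  assume SW: "S \<subseteq> Ustar E indep H"
  define U where "U = Ustar E indep G"
  define W where "W = Ustar E indep H"
  define j' where "j' = mrank indep H"
  have UE: "U \<subseteq> E" unfolding U_def using ustar_E[OF G] .
  have WE: "W \<subseteq> E" unfolding W_def using ustar_E[OF H] .
  have UG: "U \<subseteq> G" unfolding U_def using ustar_F[OF G] .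
  have WH: "W \<subseteq> H" unfolding W_def using ustar_F[OF H] .
  have SE: "S \<subseteq> E" using S(1) ustar_E[OF G] by auto
  have finS: "finite S" using finite_subset[OF SE finE] .
  have cxS: "card (insert x S) = m + 1" using finS x(2) S(2) by simp
  have xW: "x \<notin> W"
  proof
    assume "x \<in> W"
    then have "insert x S \<subseteq> W" using SW unfolding W_def by auto
    then have "indep (insert x S)" using ustar_indep[OF H] cxS j unfolding W_def by auto
    moreover have "insert x S \<subseteq> G" using x S UG unfolding U_def by auto
    ultimately have "card (insert x S) \<le> mrank indep G" using rank_ge by blast
    then show False using cxS m by auto
  qed
  define U' where "U' = insert x (W - {y})"
  have xE: "x \<in> E" using x UE unfolding U_def by auto
  have U'E: "U' \<subseteq> E" unfolding U'_def using xE WE by auto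
  have "mcl E indep S = G" using ustar_span[OF G S(1)] S m by auto
  moreover have "mcl E indep S \<subseteq> H" using flat_cl[OF H] SW WH unfolding W_def by auto
  ultimately have GH: "G \<subseteq> H" by auto
  have xH: "x \<in> H" using x UG GH unfolding U_def by auto
  have U'H: "U' \<subseteq> H" unfolding U'_def using xH WH by auto
  have HE: "H \<subseteq> E" using H unfolding flat_def by auto
  have up: "k_cl E indep (int j' - 1) U' \<subseteq> H"
    using kcl_mono[OF HE U'H] flat_kcl[OF H] by auto
  define T where "T = insert x (S - {y})"
  have TU: "T \<subseteq> U" unfolding T_def using x S unfolding U_def by auto
  have "S \<noteq> {}" using y by auto
  then have "card S > 0" using finS by auto
  then have m1: "m \<ge> 1" using S(2) by simp
  have cT: "card T = m" unfolding T_def using finS x y S(2) m1 by simp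
  have indT: "indep T" using ustar_indep[OF G] TU cT m unfolding U_def by auto
  have yT: "insert y T = insert x S" unfolding T_def using y by auto
  have "mrank indep (insert y T) \<le> mrank indep G" using yT x S UG unfolding U_def
    by (intro rank_mono) auto
  moreover have "mrank indep T \<le> mrank indep (insert y T)" by (rule rank_mono) auto
  moreover have "mrank indep T = m" using rank_indep[OF indT] cT by auto
  ultimately have "mrank indep (insert y T) = mrank indep T" using m by auto
  moreover have yE: "y \<in> E" using y S UE unfolding U_def by auto
  ultimately have ycl: "y \<in> mcl E indep T" unfolding mcl_def by auto
  have TU': "T \<subseteq> U'" unfolding T_def U'_def using SW y xy unfolding W_def by auto
  have "T \<subseteq> k_cl E indep (int j' - 1) U'" using TU' kcl_sub[OF U'E] by auto
  moreover have "int (card T) \<le> int j' - 1" using cT j unfolding j'_def by auto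
  ultimately have "mcl E indep T \<subseteq> k_cl E indep (int j' - 1) U'" using kcl_small by blast
  then have "y \<in> k_cl E indep (int j' - 1) U'" using ycl by auto
  then have "W \<subseteq> k_cl E indep (int j' - 1) U'" using kcl_sub[OF U'E] unfolding U'_def by auto
  then have "k_cl E indep (int j' - 1) W \<subseteq> k_cl E indep (int j' - 1) U'"
    using kcl_least[OF kcl_E[OF U'E] _ kcl_closed] by blast
  moreover have "k_cl E indep (int j' - 1) W = H" unfolding W_def j'_def using ustar_kcl[OF H] .
  ultimately have eq: "k_cl E indep (int j' - 1) U' = H" using up by auto
  have yW: "y \<in> W" using y SW unfolding W_def by auto
  have xy': "x \<noteq> y" using xy by auto
  have finW: "finite W" using WE finE finite_subset by blast
  have d1: "U' - W = {x}" unfolding U'_def using xW xy' by auto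
  have d2: "W - U' = {y}" unfolding U'_def using yW xy' by auto
  have "card (W - {y}) = card W - 1" using yW finW by simp
  moreover have "card W \<ge> 1" using yW finW card_0_eq by (metis One_nat_def Suc_leI empty_iff neq0_conv)
  ultimately have "card U' = card W" unfolding U'_def using xW finW by simp
  moreover have "U' \<noteq> W" using d1 by auto
  moreover have "Min ((U' - W) \<union> (W - U')) = x" using d1 d2 xy by auto
  moreover have "x \<in> U'" unfolding U'_def by auto
  ultimately have "glex_less U' W" unfolding glex_less_def by auto
  then show False using ustar_min[OF H U'E] eq unfolding W_def j'_def by blast
qed

end

lemma consec_min_inj:
  assumes U: "finite U" and V1: "V1 \<in> V_of k U" and V2: "V2 \<in> V_of k U" and mm: "Min V1 = Min V2"
  shows "V1 = V2"
proof -
  have c1: "consecutive V1 U" "card V1 = k + 1" and c2: "consecutive V2 U" "card V2 = k + 1"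
    using V1 V2 unfolding V_of_def by auto
  have s1: "V1 \<subseteq> U" and s2: "V2 \<subseteq> U" using c1 c2 unfolding consecutive_def by auto
  have f1: "finite V1" "V1 \<noteq> {}" using s1 U c1 finite_subset by (auto intro: finite_subset)
  have f2: "finite V2" "V2 \<noteq> {}" using s2 U c2 finite_subset by (auto intro: finite_subset)
  have sub: "A \<subseteq> B" if cA: "consecutive A U" "finite A" "A \<noteq> {}" and cB: "consecutive B U" "finite B" "B \<noteq> {}"
    and mins: "Min A = Min B" and maxs: "Max A \<le> Max B" for A B
  proof
    fix z assume z: "z \<in> A"
    show "z \<in> B"
    proof (rule ccontr)
      assume zB: "z \<notin> B"
      have zU: "z \<in> U" using z cA unfolding consecutive_def by auto
      have "Min B \<le> z" using mins z cA(2) by (metis Min_le)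
      moreover have "Min B \<noteq> z" using zB Min_in[OF cB(2,3)] by auto
      ultimately have lt1: "Min B < z" by auto
      have "z \<le> Max B" using maxs z cA by (meson Max_ge order_trans)
      moreover have "Max B \<noteq> z" using zB Max_in[OF cB(2,3)] by auto
      ultimately have lt2: "z < Max B" by auto
      have "Min B \<in> B" "Max B \<in> B" using cB by auto
      then show False using cB(1) lt1 lt2 zU zB unfolding consecutive_def by blast
    qed
  qed
  show ?thesis
  proof (cases "Max V1 \<le> Max V2")
    case True
    then have "V1 \<subseteq> V2" using sub[OF c1(1) f1 c2(1) f2 mm] by auto
    then show ?thesis using c1 c2 f2 by (metis card_subset_eq)
  next
    case False
    then have "V2 \<subseteq> V1" using sub[OF c2(1) f2 c1(1) f1 mm[symmetric]] by auto
    then show ?thesis using c1 c2 f1 by (metis card_subset_eq)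
  qed
qed

lemma consec_count: assumes U: "finite U" shows "card (V_of k U) \<le> card U - k"
proof -
  define f where "f a = card {x\<in>U. a < x}" for a
  define A where "A = {a\<in>U. k \<le> f a}"
  have inj: "inj_on Min (V_of k U)" using consec_min_inj[OF U] by (intro inj_onI) auto
  have img: "Min ` V_of k U \<subseteq> A"
  proof
    fix a assume "a \<in> Min ` V_of k U"
    then obtain V where V: "V \<in> V_of k U" "a = Min V" by auto
    have c: "consecutive V U" "card V = k + 1" using V unfolding V_of_def by auto
    have sV: "V \<subseteq> U" using c unfolding consecutive_def by auto
    have fV: "finite V" "V \<noteq> {}" using sV U c by (auto intro: finite_subset)
    have aV: "a \<in> V" using V fV by auto
    have "V - {a} \<subseteq> {x\<in>U. a < x}" using sV V fV by (auto simp: order.not_eq_order_implies_strict)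
    then have "card (V - {a}) \<le> f a" unfolding f_def using U by (intro card_mono) auto
    moreover have "card (V - {a}) = k" using aV fV c by simp
    ultimately show "a \<in> A" unfolding A_def using aV sV by auto
  qed
  have injf: "inj_on f U"
  proof (rule inj_onI)
    fix a b assume ab: "a \<in> U" "b \<in> U" "f a = f b"
    show "a = b"
    proof (rule ccontr)
      assume "a \<noteq> b"
      then consider "a < b" | "b < a" by (blast elim: linorder_neqE)
      then show False
      proof cases
        case 1
        have "{x\<in>U. b < x} \<subset> {x\<in>U. a < x}" using 1 ab by auto
        then have "f b < f a" unfolding f_def using U by (intro psubset_card_mono) auto
        then show False using ab by auto
      next
        case 2
        have "{x\<in>U. a < x} \<subset> {x\<in>U. b < x}" using 2 ab by auto
        then have "f a < f b" unfolding f_def using U by (intro psubset_card_mono) auto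
        then show False using ab by auto
      qed
    qed
  qed
  have "f ` A \<subseteq> {k..<card U}"
  proof
    fix t assume "t \<in> f ` A"
    then obtain a where a: "a \<in> A" "t = f a" by auto
    have "{x\<in>U. a < x} \<subseteq> U - {a}" by auto
    then have "f a \<le> card (U - {a})" unfolding f_def using U by (intro card_mono) auto
    moreover have "card (U - {a}) < card U" using a U unfolding A_def by (intro card_Diff1_less) auto
    ultimately show "t \<in> {k..<card U}" using a unfolding A_def by auto
  qed
  moreover have "inj_on f A" using injf unfolding A_def by (rule inj_on_subset) auto
  ultimately have "card A \<le> card {k..<card U}" using card_inj_on_le by (metis finite_atLeastLessThan)
  then have cA: "card A \<le> card U - k" by simp
  have "card (V_of k U) = card (Min ` V_of k U)" using inj by (simp add: card_image)
  also have "\<dots> \<le> card A" using img U unfolding A_def by (intro card_mono) auto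
  finally show ?thesis using cA by simp
qed

definition up :: "'a set \<Rightarrow> nat \<Rightarrow> 'a set set \<Rightarrow> 'a set set" where
  "up E m X = {W. W \<subseteq> E \<and> card W = Suc m \<and> (\<exists>D\<in>X. D \<subseteq> W)}"

lemma supersets_card: assumes E: "finite E" and D: "D \<subseteq> E" "card D = m"
  shows "card {W. W \<subseteq> E \<and> card W = Suc m \<and> D \<subseteq> W} = card E - m"
proof -
  have finD: "finite D" using D E finite_subset by blast
  have eq: "{W. W \<subseteq> E \<and> card W = Suc m \<and> D \<subseteq> W} = (\<lambda>e. insert e D) ` (E - D)"
  proof
    show "(\<lambda>e. insert e D) ` (E - D) \<subseteq> {W. W \<subseteq> E \<and> card W = Suc m \<and> D \<subseteq> W}"
      using D finD by auto
    show "{W. W \<subseteq> E \<and> card W = Suc m \<and> D \<subseteq> W} \<subseteq> (\<lambda>e. insert e D) ` (E - D)"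
    proof
      fix W assume W: "W \<in> {W. W \<subseteq> E \<and> card W = Suc m \<and> D \<subseteq> W}"
      have finW: "finite W" using W E finite_subset by blast
      have "card (W - D) = 1" using W D finD finW by (simp add: card_Diff_subset)
      then obtain e where e: "W - D = {e}" by (auto simp: card_Suc_eq)
      then have "W = insert e D" using W by auto
      moreover have "e \<in> E - D" using e W by auto
      ultimately show "W \<in> (\<lambda>e. insert e D) ` (E - D)" by auto
    qed
  qed
  have "inj_on (\<lambda>e. insert e D) (E - D)" by (intro inj_onI) auto
  then have "card ((\<lambda>e. insert e D) ` (E - D)) = card (E - D)" by (rule card_image)
  also have "\<dots> = card E - m" using D finD by (simp add: card_Diff_subset)
  finally show ?thesis using eq by simp
qed

lemma local_lym: assumes E: "finite E" and X: "X \<subseteq> {S. S \<subseteq> E \<and> card S = m}"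
  shows "(card E - m) * card X \<le> Suc m * card (up E m X)"
proof -
  have finPow: "finite (Pow E)" using E by auto
  have finX: "finite X" using X finite_subset[of X "Pow E"] E by auto
  have finU: "finite (up E m X)" unfolding up_def using finite_subset[of _ "Pow E"] E by auto
  define P where "P = Sigma X (\<lambda>D. {W\<in>up E m X. D \<subseteq> W})"
  define P' where "P' = Sigma (up E m X) (\<lambda>W. {D\<in>X. D \<subseteq> W})"
  have "card P = (\<Sum>D\<in>X. card {W\<in>up E m X. D \<subseteq> W})" unfolding P_def
    using finX finU by (intro card_SigmaI) auto
  also have "\<dots> = (\<Sum>D\<in>X. card E - m)"
  proof (rule sum.cong)
    fix D assume D: "D \<in> X"
    have "{W\<in>up E m X. D \<subseteq> W} = {W. W \<subseteq> E \<and> card W = Suc m \<and> D \<subseteq> W}" unfolding up_def using D by auto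
    then show "card {W\<in>up E m X. D \<subseteq> W} = card E - m" using supersets_card[OF E] D X by auto
  qed simp
  finally have cP: "card P = (card E - m) * card X" by simp
  have "P' = (\<lambda>(a,b). (b,a)) ` P" unfolding P_def P'_def by auto
  moreover have "inj_on (\<lambda>(a,b). (b,a)) P" by (intro inj_onI) auto
  ultimately have "card P' = card P" by (simp add: card_image)
  moreover have "card P' = (\<Sum>W\<in>up E m X. card {D\<in>X. D \<subseteq> W})" unfolding P'_def
    using finX finU by (intro card_SigmaI) auto
  moreover have "(\<Sum>W\<in>up E m X. card {D\<in>X. D \<subseteq> W}) \<le> (\<Sum>W\<in>up E m X. Suc m)"
  proof (rule sum_mono)
    fix W assume W: "W \<in> up E m X"
    have finW: "finite W" using W E finite_subset unfolding up_def by blast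
    have "{D\<in>X. D \<subseteq> W} \<subseteq> {D. D \<subseteq> W \<and> card D = m}" using X by auto
    then have "card {D\<in>X. D \<subseteq> W} \<le> card {D. D \<subseteq> W \<and> card D = m}"
      using finW by (intro card_mono) auto
    also have "\<dots> = card W choose m" using n_subsets[OF finW] .
    also have "\<dots> = Suc m" using W unfolding up_def by simp
    finally show "card {D\<in>X. D \<subseteq> W} \<le> Suc m" .
  qed
  ultimately show ?thesis using cP by (simp add: mult.commute)
qed

lemma noninit_count: fixes U :: "'a::linorder set" assumes U: "finite U"
  shows "card {S. S \<subseteq> U \<and> card S = m \<and> (\<exists>x\<in>U - S. \<exists>y\<in>S. x < y)} + 1 \<ge> card U choose m"
proof -
  define A where "A = {S. S \<subseteq> U \<and> card S = m}"
  define G where "G = {S. S \<subseteq> U \<and> card S = m \<and> (\<exists>x\<in>U - S. \<exists>y\<in>S. x < y)}"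
  define B where "B = {S\<in>A. \<not> (\<exists>x\<in>U - S. \<exists>y\<in>S. x < y)}"
  have finA: "finite A" unfolding A_def using U by simp
  have AGB: "A = G \<union> B" unfolding A_def G_def B_def by auto
  have "card B \<le> Suc 0"
  proof -
    have "finite B" using finA unfolding B_def by auto
    moreover have "\<forall>S1\<in>B. \<forall>S2\<in>B. S1 = S2"
    proof (intro ballI, rule ccontr)
      fix S1 S2 assume S1: "S1 \<in> B" and S2: "S2 \<in> B" and ne: "S1 \<noteq> S2"
      have c: "card S1 = card S2" "S1 \<subseteq> U" "S2 \<subseteq> U" using S1 S2 unfolding B_def A_def by auto
      have f: "finite S1" "finite S2" using c U finite_subset by auto
      have "\<not> S1 \<subseteq> S2" using c f ne card_subset_eq by metis
      then obtain a where a: "a \<in> S1" "a \<notin> S2" by auto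
      have "\<not> S2 \<subseteq> S1" using c f ne card_subset_eq by metis
      then obtain b where b: "b \<in> S2" "b \<notin> S1" by auto
      have "\<not> b < a" using S1 a b c unfolding B_def by auto
      moreover have "\<not> a < b" using S2 a b c unfolding B_def by auto
      moreover have "a \<noteq> b" using a b by auto
      ultimately show False by (blast elim: linorder_neqE)
    qed
    ultimately show ?thesis using card_le_Suc0_iff_eq by blast
  qed
  have "card A \<le> card G + card B" using AGB finA by (simp add: card_Un_le)
  moreover have "card A = card U choose m" unfolding A_def using n_subsets[OF U] .
  ultimately show ?thesis unfolding G_def using \<open>card B \<le> Suc 0\<close> by simp
qed

lemma choose_lin: assumes m: "2 \<le> m" and u: "m + 1 \<le> u" shows "(m + 1) * (u - m) \<le> u choose m"
  using u
proof (induction u rule: dec_induct)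
  case base
  have "Suc m choose m = Suc m" by (rule binomial_Suc_n)
  then show ?case by simp
next
  case (step u)
  obtain m' where m': "m = Suc m'" using m by (cases m) auto
  have rec: "Suc u choose m = (u choose m') + (u choose m)" using m' by simp
  have "Suc m choose m' \<le> u choose m'" using step.hyps by (intro binomial_right_mono) simp
  moreover have "Suc m choose m' = Suc m choose 2"
    using m' binomial_symmetric[of m' "Suc (Suc m')"] by (simp add: numeral_2_eq_2)
  moreover have "m + 1 \<le> Suc m choose 2"
  proof -
    have "Suc m choose 2 = Suc m * m div 2" by (simp add: choose_two)
    moreover have "2 * (m + 1) \<le> Suc m * m"
    proof -
      have "2 * m \<le> m * m" using m by (intro mult_right_mono) auto
      moreover have "Suc m * m = m * m + m" by simp
      moreover have "2 * (m + 1) = 2 * m + 2" by simp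
      ultimately show ?thesis using m by presburger
    qed
    ultimately show ?thesis by simp
  qed
  ultimately have "m + 1 \<le> u choose m'" by linarith
  then have "(m + 1) * (Suc u - m) = (m + 1) * (u - m) + (m + 1)" using step.hyps by (simp add: Suc_diff_le)
  also have "\<dots> \<le> (u choose m) + (u choose m')" using step.IH \<open>m + 1 \<le> u choose m'\<close> by linarith
  finally show ?case using rec by simp
qed

lemma two_choose: "2 * (x choose 2) = x * (x - 1)"
proof -
  have "even (x * (x - 1))" by auto
  then show ?thesis by (simp add: choose_two)
qed

lemma pairs_bound: assumes n: "6 \<le> n" and t: "t + 1 \<le> n" shows "3 * t \<le> (n choose 2) - ((n - t) choose 2)"
proof -
  define a where "a = n - t"
  have na: "n = a + t" "1 \<le> a" using t unfolding a_def by auto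
  have "2 * (n choose 2) = n * (n - 1)" by (rule two_choose)
  moreover have "2 * (a choose 2) = a * (a - 1)" by (rule two_choose)
  moreover have "6 * t + a * (a - 1) \<le> n * (n - 1)"
  proof -
    have "a * (a - 1) + 6 * t \<le> a * (a - 1) + 2 * a * t + t * (t - 1)"
    proof -
      have "6 * t \<le> 2 * a * t + t * (t - 1)"
      proof -
        have "6 \<le> 2 * a + (t - 1) \<or> t = 0" using na n by auto
        then show ?thesis
        proof
          assume h: "6 \<le> 2 * a + (t - 1)"
          have "6 * t \<le> (2 * a + (t - 1)) * t" using h by (intro mult_right_mono) auto
          also have "\<dots> = 2 * a * t + t * (t - 1)" by (simp add: algebra_simps)
          finally show ?thesis .
        qed simp
      qed
      then show ?thesis by simp
    qed
    also have "\<dots> = n * (n - 1)"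
    proof -
      have "int (a * (a - 1) + 2 * a * t + t * (t - 1)) = int (n * (n - 1))"
        using na by (cases a; cases t) (auto simp: algebra_simps of_nat_diff)
      then show ?thesis by linarith
    qed
    finally show ?thesis by simp
  qed
  ultimately show ?thesis unfolding a_def by linarith
qed

context mloc begin

definition fam :: "nat \<Rightarrow> 'a set set" where "fam k = Ustar_family E indep k"
definition famGe :: "nat \<Rightarrow> 'a set set" where
  "famGe m = (\<Union>j\<in>{m..<mrank indep E}. fam j)"
definition lev :: "nat \<Rightarrow> 'a set set" where "lev m = {S. S \<subseteq> E \<and> card S = m}"
definition K :: "nat \<Rightarrow> 'a set set" where "K m = {S\<in>lev m. \<exists>U\<in>famGe m. S \<subseteq> U}"
definition Kp :: "nat \<Rightarrow> 'a set set" where "Kp m = {S\<in>lev m. \<exists>U\<in>famGe (Suc m). S \<subseteq> U}"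
definition L :: "nat \<Rightarrow> 'a set set" where "L m = lev m - K m"
definition Lp :: "nat \<Rightarrow> 'a set set" where "Lp m = lev m - Kp m"
definition Ab :: "'a set \<Rightarrow> nat \<Rightarrow> 'a set set" where
  "Ab U m = {S. S \<subseteq> U \<and> card S = m \<and> (\<exists>x\<in>U - S. \<exists>y\<in>S. x < y)}"
definition cc :: "nat \<Rightarrow> nat" where "cc k = card (V_k E indep k)"

lemma fam_elim: assumes "U \<in> fam k"
  obtains F where "flat E indep F" "mrank indep F = k" "U = Ustar E indep F" "card U > k"
  using assms unfolding fam_def Ustar_family_def by blast

lemma fam_E: "U \<in> fam k \<Longrightarrow> U \<subseteq> E"
  by (metis fam_elim ustar_E)

lemma fam_fin_sets: "U \<in> fam k \<Longrightarrow> finite U"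
  using fam_E finE finite_subset by blast

lemma fam_finite: "finite (fam k)"
proof -
  have "fam k \<subseteq> Pow E" using fam_E by auto
  then show ?thesis using finE finite_subset by blast
qed

lemma famGe_elim: assumes "U \<in> famGe m"
  obtains F where "flat E indep F" "mrank indep F \<ge> m" "U = Ustar E indep F"
  using assms unfolding famGe_def by (auto elim: fam_elim)

lemma lev_fin: "finite (lev m)"
proof -
  have "lev m \<subseteq> Pow E" unfolding lev_def by auto
  then show ?thesis using finE finite_subset by blast
qed

lemma lev_card: "card (lev m) = card E choose m"
  unfolding lev_def using n_subsets[OF finE] .

lemma cc_bound: "cc k \<le> (\<Sum>U\<in>fam k. card U - k)"
proof -
  have "cc k \<le> (\<Sum>U\<in>fam k. card (V_of k U))"
    unfolding cc_def V_k_def fam_def[symmetric] using fam_finite by (rule card_UN_le)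
  also have "\<dots> \<le> (\<Sum>U\<in>fam k. card U - k)"
    by (intro sum_mono consec_count fam_fin_sets)
  finally show ?thesis .
qed

lemma up_sub: "up E m (Lp m) \<subseteq> L (Suc m)"
proof
  fix W assume W: "W \<in> up E m (Lp m)"
  then obtain D where D: "D \<in> Lp m" "D \<subseteq> W" unfolding up_def by auto
  have Wl: "W \<in> lev (Suc m)" using W unfolding up_def lev_def by auto
  have "W \<notin> K (Suc m)"
  proof
    assume "W \<in> K (Suc m)"
    then obtain U where U: "U \<in> famGe (Suc m)" "W \<subseteq> U" unfolding K_def by auto
    have "D \<subseteq> U" using U D by auto
    then have "D \<in> Kp m" using D U unfolding Kp_def Lp_def by blast
    then show False using D unfolding Lp_def by auto
  qed
  then show "W \<in> L (Suc m)" unfolding L_def using Wl by auto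
qed

lemma L_Lp: "L m \<subseteq> Lp m"
proof -
  have "famGe (Suc m) \<subseteq> famGe m" unfolding famGe_def by (auto intro!: bexI)
  then have "Kp m \<subseteq> K m" unfolding Kp_def K_def by auto
  then show ?thesis unfolding L_def Lp_def by auto
qed

lemma Ab_in: assumes U: "U \<in> fam m" and mr: "m < mrank indep E"
  shows "Ab U m \<subseteq> Lp m - L m"
proof
  fix S assume S: "S \<in> Ab U m"
  obtain G where G: "flat E indep G" "mrank indep G = m" "U = Ustar E indep G" "card U > m"
    using U by (rule fam_elim)
  have SU: "S \<subseteq> U" "card S = m" using S unfolding Ab_def by auto
  have Sl: "S \<in> lev m" unfolding lev_def using SU fam_E[OF U] by auto
  have "U \<in> famGe m" unfolding famGe_def using U mr by auto
  then have SK: "S \<in> K m" unfolding K_def using Sl SU by auto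
  have "S \<notin> Kp m"
  proof
    assume "S \<in> Kp m"
    then obtain W where W: "W \<in> famGe (Suc m)" "S \<subseteq> W" unfolding Kp_def by auto
    obtain H where H: "flat E indep H" "mrank indep H \<ge> Suc m" "W = Ustar E indep H"
      using W(1) by (rule famGe_elim)
    obtain x y where xy: "x \<in> U - S" "y \<in> S" "x < y" using S unfolding Ab_def by auto
    have "\<not> S \<subseteq> Ustar E indep H"
      using swap[OF G(1) G(2), of S x y H] SU xy H G by auto
    then show False using W H by auto
  qed
  then show "S \<in> Lp m - L m" unfolding Lp_def L_def using Sl SK by auto
qed

lemma Ab_disj: assumes U1: "U1 \<in> fam m" and U2: "U2 \<in> fam m" and ne: "U1 \<noteq> U2"
  shows "Ab U1 m \<inter> Ab U2 m = {}"
proof (rule ccontr)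
  assume "Ab U1 m \<inter> Ab U2 m \<noteq> {}"
  then obtain S where S: "S \<subseteq> U1" "S \<subseteq> U2" "card S = m" unfolding Ab_def by auto
  obtain G1 where G1: "flat E indep G1" "mrank indep G1 = m" "U1 = Ustar E indep G1"
    using U1 by (rule fam_elim)
  obtain G2 where G2: "flat E indep G2" "mrank indep G2 = m" "U2 = Ustar E indep G2"
    using U2 by (rule fam_elim)
  have "G1 = G2" using ustar_unique[OF G1(1) G2(1)] S G1 G2 by auto
  then show False using ne G1 G2 by auto
qed

lemma Ab_fin: "U \<in> fam m \<Longrightarrow> finite (Ab U m)"
proof -
  assume "U \<in> fam m"
  then have "Ab U m \<subseteq> Pow U" unfolding Ab_def by auto
  then show ?thesis using fam_fin_sets \<open>U \<in> fam m\<close> finite_subset by blast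
qed

lemma Lp_lower: assumes mr: "m < mrank indep E"
  shows "card (L m) + (\<Sum>U\<in>fam m. (card U choose m) - 1) \<le> card (Lp m)"
proof -
  define A where "A = (\<Union>U\<in>fam m. Ab U m)"
  have cA: "card A = (\<Sum>U\<in>fam m. card (Ab U m))" unfolding A_def
    using fam_finite Ab_fin Ab_disj by (intro card_UN_disjoint) auto
  have "(\<Sum>U\<in>fam m. (card U choose m) - 1) \<le> (\<Sum>U\<in>fam m. card (Ab U m))"
  proof (rule sum_mono)
    fix U assume "U \<in> fam m"
    then have "finite U" by (rule fam_fin_sets)
    then show "(card U choose m) - 1 \<le> card (Ab U m)" using noninit_count[of U m] unfolding Ab_def by simp
  qed
  moreover have "A \<subseteq> Lp m - L m" unfolding A_def using Ab_in[OF _ mr] by auto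
  moreover have "L m \<subseteq> Lp m" by (rule L_Lp)
  moreover have "finite (Lp m)" unfolding Lp_def using lev_fin by auto
  ultimately have "card (L m \<union> A) = card (L m) + card A"
    by (intro card_Un_disjoint) (auto intro: finite_subset)
  moreover have "card (L m \<union> A) \<le> card (Lp m)"
    using \<open>A \<subseteq> Lp m - L m\<close> \<open>L m \<subseteq> Lp m\<close> \<open>finite (Lp m)\<close> by (intro card_mono) auto
  ultimately show ?thesis using cA \<open>(\<Sum>U\<in>fam m. (card U choose m) - 1) \<le> (\<Sum>U\<in>fam m. card (Ab U m))\<close>
    by linarith
qed


lemma step: assumes m2: "2 \<le> m" and mr: "Suc m < mrank indep E" and n: "2 * mrank indep E \<le> card E"
  and IH: "(m + 1) * (\<Sum>k<m. cc k) \<le> card (L m)"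
  shows "(m + 2) * (\<Sum>k<Suc m. cc k) \<le> card (L (Suc m))"
proof -
  define nn where "nn = card E"
  define P where "P = (\<Sum>k<m. cc k)"
  define Q where "Q = (\<Sum>U\<in>fam m. card U - m)"
  define R where "R = (\<Sum>U\<in>fam m. (card U choose m) - 1)"
  have mr': "m < mrank indep E" using mr by auto
  have nm: "m + 2 \<le> nn - m" using n mr unfolding nn_def by linarith
  have nm4: "m + 4 \<le> nn - m" using n mr unfolding nn_def by linarith
  have h1: "(nn - m) * card (Lp m) \<le> Suc m * card (up E m (Lp m))"
    unfolding nn_def using local_lym[OF finE] unfolding Lp_def lev_def by auto
  have finL: "finite (L (Suc m))" unfolding L_def using lev_fin by auto
  have h2: "card (up E m (Lp m)) \<le> card (L (Suc m))" using up_sub finL by (intro card_mono) auto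
  have h3: "card (L m) + R \<le> card (Lp m)" unfolding R_def using Lp_lower[OF mr'] .
  have h4: "(m + 1) * (m + 2) * Q \<le> (nn - m) * R"
  proof -
    have "(m + 1) * (m + 2) * Q = (\<Sum>U\<in>fam m. (m + 1) * (m + 2) * (card U - m))"
      unfolding Q_def by (simp add: sum_distrib_left)
    also have "\<dots> \<le> (\<Sum>U\<in>fam m. (nn - m) * ((card U choose m) - 1))"
    proof (rule sum_mono)
      fix U assume U: "U \<in> fam m"
      obtain G where G: "card U > m" using U by (rule fam_elim)
      define u where "u = card U"
      have u: "m + 1 \<le> u" using G unfolding u_def by auto
      have c: "(m + 1) * (u - m) \<le> u choose m" using choose_lin[OF m2 u] .
      have "(m + 1) * (u - m) = m * (u - m) + (u - m)" by simp
      moreover have "1 \<le> u - m" using u by simp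
      ultimately have "m * (u - m) + 1 \<le> (m + 1) * (u - m)" by linarith
      then have c2: "m * (u - m) \<le> (u choose m) - 1" using c by linarith
      have "(m + 1) * (m + 2) \<le> (nn - m) * m"
      proof -
        obtain d where d: "m = d + 2" using m2 by (metis add.commute le_Suc_ex)
        have "(m + 1) * (m + 2) \<le> (m + 4) * m" unfolding d by (simp add: algebra_simps)
        also have "\<dots> \<le> (nn - m) * m" using nm4 by (intro mult_right_mono) auto
        finally show ?thesis .
      qed
      then have "(m + 1) * (m + 2) * (u - m) \<le> (nn - m) * m * (u - m)" by (intro mult_right_mono) auto
      also have "\<dots> \<le> (nn - m) * ((u choose m) - 1)" using c2 by (simp add: mult.assoc)
      finally show "(m + 1) * (m + 2) * (card U - m) \<le> (nn - m) * ((card U choose m) - 1)"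
        unfolding u_def .
    qed
    also have "\<dots> = (nn - m) * R" unfolding R_def by (simp add: sum_distrib_left)
    finally show ?thesis .
  qed
  have h5: "cc m \<le> Q" unfolding Q_def by (rule cc_bound)
  have "(m + 1) * ((m + 2) * (\<Sum>k<Suc m. cc k)) = (m + 1) * (m + 2) * P + (m + 1) * (m + 2) * cc m"
    unfolding P_def by (simp add: algebra_simps)
  also have "\<dots> \<le> (m + 1) * (m + 2) * P + (m + 1) * (m + 2) * Q" using h5 by (intro add_left_mono mult_left_mono) auto
  also have "\<dots> \<le> (nn - m) * ((m + 1) * P) + (nn - m) * R"
  proof -
    have "(m + 1) * (m + 2) * P \<le> (nn - m) * ((m + 1) * P)"
    proof -
      have "(m + 2) * ((m + 1) * P) \<le> (nn - m) * ((m + 1) * P)" using nm by (intro mult_right_mono) auto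
      then show ?thesis by (simp add: algebra_simps)
    qed
    then show ?thesis using h4 by linarith
  qed
  also have "\<dots> \<le> (nn - m) * card (L m) + (nn - m) * R" using IH unfolding P_def by simp
  also have "\<dots> = (nn - m) * (card (L m) + R)" by (simp add: algebra_simps)
  also have "\<dots> \<le> (nn - m) * card (Lp m)" using h3 by simp
  also have "\<dots> \<le> (m + 1) * card (L (Suc m))" using h1 h2 by (metis Suc_eq_plus1 le_trans mult_le_mono2)
  finally have "(m + 1) * ((m + 2) * (\<Sum>k<Suc m. cc k)) \<le> (m + 1) * card (L (Suc m))" .
  then show ?thesis by (subst (asm) mult_le_cancel1) simp
qed

end

context mloc begin

definition Lo :: "'a set set" where "Lo = {S\<in>lev 1. \<not> indep S}"

lemma Lo_Lp: assumes r: "3 \<le> mrank indep E" shows "Lo \<subseteq> Lp 1"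
proof
  fix S assume S: "S \<in> Lo"
  have "S \<notin> Kp 1"
  proof
    assume "S \<in> Kp 1"
    then obtain U where U: "U \<in> famGe 2" "S \<subseteq> U" unfolding Kp_def by (auto simp: numeral_2_eq_2)
    obtain H where H: "flat E indep H" "mrank indep H \<ge> 2" "U = Ustar E indep H"
      using U(1) by (rule famGe_elim)
    have "card S = 1" using S unfolding Lo_def lev_def by auto
    then have "indep S" using ustar_indep[OF H(1)] U H by auto
    then show False using S unfolding Lo_def by auto
  qed
  then show "S \<in> Lp 1" using S unfolding Lo_def Lp_def by auto
qed

lemma Ab1_indep: "U \<in> fam 1 \<Longrightarrow> S \<in> Ab U 1 \<Longrightarrow> indep S"
proof -
  assume U: "U \<in> fam 1" and S: "S \<in> Ab U 1"
  obtain G where G: "flat E indep G" "mrank indep G = 1" "U = Ustar E indep G" using U by (rule fam_elim)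
  show "indep S" using ustar_indep[OF G(1)] S G unfolding Ab_def by auto
qed

lemma cc0: "cc 0 \<le> card Lo"
proof -
  have "V_k E indep 0 \<subseteq> Lo"
  proof
    fix V assume "V \<in> V_k E indep 0"
    then obtain U where U: "U \<in> fam 0" "V \<in> V_of 0 U" unfolding V_k_def fam_def by auto
    obtain G where G: "flat E indep G" "mrank indep G = 0" "U = Ustar E indep G" using U(1) by (rule fam_elim)
    have VU: "V \<subseteq> U" "card V = 1" using U(2) unfolding V_of_def consecutive_def by auto
    have VG: "V \<subseteq> G" using VU ustar_F[OF G(1)] G by auto
    have VE: "V \<subseteq> E" using VU fam_E[OF U(1)] by auto
    have "\<not> indep V"
    proof
      assume "indep V"
      then have "card V \<le> mrank indep G" using rank_ge VG by blast
      then show False using G VU by auto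
    qed
    then show "V \<in> Lo" unfolding Lo_def lev_def using VU VE by auto
  qed
  moreover have "finite Lo" unfolding Lo_def using lev_fin by auto
  ultimately show ?thesis unfolding cc_def by (rule card_mono[rotated])
qed

lemma base_level: assumes r: "3 \<le> mrank indep E" and n: "2 * mrank indep E \<le> card E"
  shows "3 * (\<Sum>k<2. cc k) \<le> card (L 2)"
proof -
  define nn where "nn = card E"
  define A1 where "A1 = (\<Union>U\<in>fam 1. Ab U 1)"
  define B where "B = Lo \<union> A1"
  define S1 where "S1 = {x. {x} \<in> B}"
  have r1: "1 < mrank indep E" using r by auto
  have A1Lp: "A1 \<subseteq> Lp 1" unfolding A1_def using Ab_in[OF _ r1] by auto
  have BLp: "B \<subseteq> Lp 1" unfolding B_def using A1Lp Lo_Lp[OF r] by auto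
  have disj: "Lo \<inter> A1 = {}" unfolding A1_def Lo_def using Ab1_indep by auto
  have finLp: "finite (Lp 1)" unfolding Lp_def using lev_fin by auto
  have finB: "finite B" using BLp finLp finite_subset by blast
  have cA1: "card A1 = (\<Sum>U\<in>fam 1. card (Ab U 1))" unfolding A1_def
    using fam_finite Ab_fin Ab_disj by (intro card_UN_disjoint) auto
  have "cc 1 \<le> (\<Sum>U\<in>fam 1. card U - 1)" using cc_bound .
  also have "\<dots> \<le> (\<Sum>U\<in>fam 1. card (Ab U 1))"
  proof (rule sum_mono)
    fix U assume "U \<in> fam 1"
    then have "finite U" by (rule fam_fin_sets)
    then show "card U - 1 \<le> card (Ab U 1)" using noninit_count[of U 1] unfolding Ab_def by simp
  qed
  finally have c1: "cc 1 \<le> card A1" using cA1 by simp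
  have "card B = card Lo + card A1" unfolding B_def using disj finB unfolding B_def
    by (intro card_Un_disjoint) auto
  then have tB: "cc 0 + cc 1 \<le> card B" using cc0 c1 by simp
  have Blev: "B \<subseteq> lev 1" using BLp unfolding Lp_def by auto
  have Bimg: "B = (\<lambda>x. {x}) ` S1"
  proof
    show "B \<subseteq> (\<lambda>x. {x}) ` S1"
    proof
      fix S assume S: "S \<in> B"
      then have "card S = 1" using Blev unfolding lev_def by auto
      then obtain x where "S = {x}" by (rule card_1_singletonE)
      then show "S \<in> (\<lambda>x. {x}) ` S1" using S unfolding S1_def by auto
    qed
    show "(\<lambda>x. {x}) ` S1 \<subseteq> B" unfolding S1_def by auto
  qed
  have S1E: "S1 \<subseteq> E" using Blev unfolding S1_def lev_def by auto
  have cS1: "card S1 = card B" unfolding Bimg by (rule card_image[symmetric]) (auto intro: inj_onI)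
  have ex: "\<exists>e\<in>E. e \<notin> S1"
  proof (cases "fam 1 = {}")
    case True
    obtain I where I: "I \<subseteq> E" "indep I" "card I = mrank indep E" using rank_ex indep_sub by blast
    then have "I \<noteq> {}" using r by auto
    then obtain x where x: "x \<in> I" by auto
    have "indep {x}" using I x indep_mono by auto
    moreover have "A1 = {}" unfolding A1_def using True by auto
    ultimately have "x \<notin> S1" unfolding S1_def B_def Lo_def by auto
    then show ?thesis using x I by auto
  next
    case False
    then obtain U where U: "U \<in> fam 1" by auto
    obtain G where G: "flat E indep G" "mrank indep G = 1" "U = Ustar E indep G" "card U > 1"
      using U by (rule fam_elim)
    have finU: "finite U" using U by (rule fam_fin_sets)
    have "U \<noteq> {}" using G by auto
    then have aU: "Min U \<in> U" using finU by auto
    define a where "a = Min U"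
    have ind: "indep {a}" using ustar_indep[OF G(1)] aU G unfolding a_def by auto
    have "{a} \<notin> A1"
    proof
      assume "{a} \<in> A1"
      then obtain U' where U': "U' \<in> fam 1" "{a} \<in> Ab U' 1" unfolding A1_def by auto
      obtain G' where G': "flat E indep G'" "mrank indep G' = 1" "U' = Ustar E indep G'"
        using U'(1) by (rule fam_elim)
      have "{a} \<subseteq> U'" using U' unfolding Ab_def by auto
      moreover have "{a} \<subseteq> U" using aU unfolding a_def by auto
      ultimately have "G = G'" using ustar_unique[OF G(1) G'(1), of "{a}"] G G' by auto
      then have "U' = U" using G G' by auto
      then obtain x where "x \<in> U" "x < a" using U' unfolding Ab_def by auto
      then show False unfolding a_def using finU by (meson Min_le not_le)
    qed
    then have "a \<notin> S1" using ind unfolding S1_def B_def Lo_def by auto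
    moreover have "a \<in> E" using aU fam_E[OF U] unfolding a_def by auto
    ultimately show ?thesis by auto
  qed
  have finS1: "finite S1" using S1E finE finite_subset by blast
  have cS1n: "card S1 + 1 \<le> nn"
  proof -
    obtain e where "e \<in> E" "e \<notin> S1" using ex by auto
    then have "S1 \<subset> E" using S1E by auto
    then show ?thesis unfolding nn_def using finE by (simp add: psubset_card_mono Suc_le_eq)
  qed
  define t where "t = cc 0 + cc 1"
  have tS: "t \<le> card S1" unfolding t_def using tB cS1 by simp
  define M where "M = {W\<in>lev 2. W \<inter> S1 \<noteq> {}}"
  have Mup: "M \<subseteq> up E 1 (Lp 1)"
  proof
    fix W assume W: "W \<in> M"
    then obtain x where x: "x \<in> W" "x \<in> S1" unfolding M_def by auto
    have "{x} \<in> Lp 1" using x BLp unfolding S1_def by auto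
    then show "W \<in> up E 1 (Lp 1)" using W x unfolding M_def up_def lev_def by (auto simp: numeral_2_eq_2)
  qed
  have Meq: "M = lev 2 - {W. W \<subseteq> E - S1 \<and> card W = 2}" unfolding M_def lev_def by auto
  have cM: "card M = (nn choose 2) - ((nn - card S1) choose 2)"
  proof -
    have sub: "{W. W \<subseteq> E - S1 \<and> card W = 2} \<subseteq> lev 2" unfolding lev_def by auto
    have "card {W. W \<subseteq> E - S1 \<and> card W = 2} = card (E - S1) choose 2"
      using finE by (intro n_subsets) auto
    moreover have "card (E - S1) = nn - card S1" unfolding nn_def using S1E finS1 by (simp add: card_Diff_subset)
    ultimately show ?thesis unfolding Meq using card_Diff_subset[OF finite_subset[OF sub lev_fin] sub] lev_card
      unfolding nn_def by simp
  qed
  have "3 * t \<le> (nn choose 2) - ((nn - t) choose 2)"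
    using pairs_bound[of nn t] n r tS cS1n unfolding nn_def by linarith
  also have "\<dots> \<le> (nn choose 2) - ((nn - card S1) choose 2)"
    using tS by (intro diff_le_mono2 binomial_right_mono) auto
  also have "\<dots> = card M" using cM by simp
  also have "\<dots> \<le> card (up E 1 (Lp 1))"
  proof -
    have "finite (up E 1 (Lp 1))" unfolding up_def
      using finite_subset[of _ "Pow E"] finE by auto
    then show ?thesis using Mup by (rule card_mono)
  qed
  also have "\<dots> \<le> card (L 2)"
  proof -
    have "finite (L 2)" unfolding L_def using lev_fin by auto
    then show ?thesis using up_sub[of 1] by (intro card_mono) (auto simp: numeral_2_eq_2)
  qed
  finally show ?thesis unfolding t_def by (simp add: numeral_2_eq_2)
qed

end

context mloc begin

lemma hyper: assumes r: "3 \<le> mrank indep E"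
  shows "mrank indep E * cc (mrank indep E - 1) \<le> card (K (mrank indep E - 1))"
proof -
  define r' where "r' = mrank indep E - 1"
  have rr: "mrank indep E = Suc r'" "2 \<le> r'" using r unfolding r'_def by auto
  define B where "B = (\<Union>U\<in>fam r'. {S. S \<subseteq> U \<and> card S = r'})"
  have cB: "card B = (\<Sum>U\<in>fam r'. card {S. S \<subseteq> U \<and> card S = r'})" unfolding B_def
  proof (intro card_UN_disjoint fam_finite ballI impI)
    fix U assume "U \<in> fam r'"
    then have "finite U" by (rule fam_fin_sets)
    then show "finite {S. S \<subseteq> U \<and> card S = r'}" by auto
  next
    fix U1 U2 assume U1: "U1 \<in> fam r'" and U2: "U2 \<in> fam r'" and ne: "U1 \<noteq> U2"
    show "{S. S \<subseteq> U1 \<and> card S = r'} \<inter> {S. S \<subseteq> U2 \<and> card S = r'} = {}"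
    proof (rule ccontr)
      assume "{S. S \<subseteq> U1 \<and> card S = r'} \<inter> {S. S \<subseteq> U2 \<and> card S = r'} \<noteq> {}"
      then obtain S where S: "S \<subseteq> U1" "S \<subseteq> U2" "card S = r'" by auto
      obtain G1 where G1: "flat E indep G1" "mrank indep G1 = r'" "U1 = Ustar E indep G1"
        using U1 by (rule fam_elim)
      obtain G2 where G2: "flat E indep G2" "mrank indep G2 = r'" "U2 = Ustar E indep G2"
        using U2 by (rule fam_elim)
      have "G1 = G2" using ustar_unique[OF G1(1) G2(1)] S G1 G2 by auto
      then show False using ne G1 G2 by auto
    qed
  qed
  have "cc r' \<le> (\<Sum>U\<in>fam r'. card U - r')" by (rule cc_bound)
  then have "Suc r' * cc r' \<le> Suc r' * (\<Sum>U\<in>fam r'. card U - r')" by (rule mult_le_mono2)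
  also have "\<dots> = (\<Sum>U\<in>fam r'. Suc r' * (card U - r'))" by (rule sum_distrib_left)
  also have "\<dots> \<le> (\<Sum>U\<in>fam r'. card {S. S \<subseteq> U \<and> card S = r'})"
  proof (rule sum_mono)
    fix U assume U: "U \<in> fam r'"
    obtain G where "card U > r'" using U by (rule fam_elim)
    then have "r' + 1 \<le> card U" by auto
    then have "(r' + 1) * (card U - r') \<le> card U choose r'" using choose_lin rr by blast
    moreover have "card {S. S \<subseteq> U \<and> card S = r'} = card U choose r'"
      using fam_fin_sets[OF U] by (rule n_subsets)
    ultimately show "Suc r' * (card U - r') \<le> card {S. S \<subseteq> U \<and> card S = r'}" by simp
  qed
  also have "\<dots> = card B" using cB by simp
  also have "\<dots> \<le> card (K r')"
  proof -
    have "B \<subseteq> K r'"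
    proof
      fix S assume "S \<in> B"
      then obtain U where U: "U \<in> fam r'" "S \<subseteq> U" "card S = r'" unfolding B_def by auto
      have "U \<in> famGe r'" unfolding famGe_def using U rr by auto
      moreover have "S \<subseteq> E" using U fam_E by blast
      ultimately show "S \<in> K r'" unfolding K_def lev_def using U by auto
    qed
    moreover have "finite (K r')" unfolding K_def using lev_fin by auto
    ultimately show ?thesis by (intro card_mono)
  qed
  finally show ?thesis using rr unfolding r'_def by simp
qed

lemma levels: assumes r: "3 \<le> mrank indep E" and n: "2 * mrank indep E \<le> card E"
  shows "2 \<le> m \<Longrightarrow> m \<le> mrank indep E - 1 \<Longrightarrow> (m + 1) * (\<Sum>k<m. cc k) \<le> card (L m)"
proof (induction m rule: dec_induct)
  case base
  then show ?case using base_level[OF r n] by simp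
next
  case (step m)
  have "Suc m < mrank indep E" using step.prems by auto
  then have "(m + 2) * (\<Sum>k<Suc m. cc k) \<le> card (L (Suc m))"
    using mloc.step[OF mloc_axioms step.hyps(1) _ n] step.IH step.prems by auto
  then show ?case by simp
qed

lemma main_nat: assumes r: "3 \<le> mrank indep E" and n: "2 * mrank indep E \<le> card E"
  shows "mrank indep E * card (V_M E indep) \<le> card E choose (mrank indep E - 1)"
proof -
  define r' where "r' = mrank indep E - 1"
  have rr: "mrank indep E = Suc r'" "2 \<le> r'" using r unfolding r'_def by auto
  have lv: "(r' + 1) * (\<Sum>k<r'. cc k) \<le> card (L r')" using levels[OF r n rr(2)] unfolding r'_def by simp
  have hy: "Suc r' * cc r' \<le> card (K r')" using hyper[OF r] rr unfolding r'_def by simp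
  have "K r' \<subseteq> lev r'" unfolding K_def by auto
  then have "card (L r') + card (K r') = card (lev r')" unfolding L_def
  proof -
    assume sub: "K r' \<subseteq> lev r'"
    have fK: "finite (K r')" using finite_subset[OF sub lev_fin] .
    have "card (lev r' - K r') = card (lev r') - card (K r')" using card_Diff_subset[OF fK sub] .
    moreover have "card (K r') \<le> card (lev r')" using card_mono[OF lev_fin sub] .
    ultimately show "card (lev r' - K r') + card (K r') = card (lev r')" by simp
  qed
  also have "\<dots> = card E choose r'" by (rule lev_card)
  finally have tot: "card (L r') + card (K r') = card E choose r'" .
  have "card (V_M E indep) \<le> (\<Sum>k<mrank indep E. card (V_k E indep k))"
    unfolding V_M_def by (rule card_UN_le) simp
  also have "\<dots> = (\<Sum>k<Suc r'. cc k)" unfolding cc_def rr by simp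
  also have "\<dots> = (\<Sum>k<r'. cc k) + cc r'" by simp
  finally have "Suc r' * card (V_M E indep) \<le> Suc r' * ((\<Sum>k<r'. cc k) + cc r')" by (rule mult_le_mono2)
  also have "\<dots> = (r' + 1) * (\<Sum>k<r'. cc k) + Suc r' * cc r'" by (simp add: algebra_simps)
  also have "\<dots> \<le> card E choose r'" using lv hy tot by linarith
  finally show ?thesis using rr unfolding r'_def by simp
qed

end

theorem corollary5p11:
  fixes E :: "'a::linorder set" and indep :: "'a set \<Rightarrow> bool" and n r :: nat
  assumes "matroid E indep"
    and "card E = n"
    and "mrank indep E = r"
    and "r \<ge> 3"
    and "n \<ge> 2 * r"
  shows "real (card (V_M E indep)) \<le> real (n choose r) / real (n - r + 1)"
proof -
  interpret mloc E indep by standard (rule assms(1))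
  have nat: "r * card (V_M E indep) \<le> n choose (r - 1)" using main_nat assms by auto
  have rn: "r \<le> n" using assms by auto
  have cm: "(n choose r) * (r choose (r - 1)) = (n choose (r - 1)) * ((n - (r - 1)) choose (r - (r - 1)))"
    using choose_mult[of "r - 1" r n] rn by auto
  have r1: "r choose (r - 1) = r" using binomial_symmetric[of "r - 1" r] assms(4) by simp
  have r2: "(n - (r - 1)) choose (r - (r - 1)) = n - r + 1" using assms(4) rn by simp
  have eq: "(n choose r) * r = (n choose (r - 1)) * (n - r + 1)" using cm r1 r2 by simp
  have pos: "real (n - r + 1) > 0" by simp
  have rpos: "real r > 0" using assms by simp
  have "real (r * card (V_M E indep)) \<le> real (n choose (r - 1))" using nat by (simp only: of_nat_le_iff)
  then have "real r * real (card (V_M E indep)) \<le> real (n choose (r - 1))" by simp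
  then have "real r * real (card (V_M E indep)) * real (n - r + 1) \<le> real (n choose (r - 1)) * real (n - r + 1)"
    using pos by (intro mult_right_mono) auto
  also have "\<dots> = real ((n choose (r - 1)) * (n - r + 1))" by (simp only: of_nat_mult)
  also have "\<dots> = real ((n choose r) * r)" using eq by simp
  also have "\<dots> = real (n choose r) * real r" by (simp only: of_nat_mult)
  finally have "real r * (real (card (V_M E indep)) * real (n - r + 1)) \<le> real r * real (n choose r)"
    by (simp add: algebra_simps)
  then have "real (card (V_M E indep)) * real (n - r + 1) \<le> real (n choose r)"
    using rpos by (simp only: mult_le_cancel_left_pos)
  then show ?thesis using pos by (simp add: field_simps)
qed

end
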